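(* Let $n$ be a positive integer and $\varphi(z)=bz$ for some $b\in\mathbb D\setminus\{0\}$. Then the composition–differentiation operator $D_{\varphi,n}f=f^{(n)}\circ\varphi$ on the Hardy space $H^2$ satisfies $$\|D_{\varphi,n}\|_{-1}=n!\binom{N}{n}|b|^{N-n},\qquad N=\Big\lfloor\frac{n}{1-|b|}\Big\rfloor.$$
   Context: $H^2$ is the Hardy space of analytic $f$ on the open unit disk $\mathbb D$ with $\|f\|^2=\sup_{0<r<1}\frac1{2\pi}\int_0^{2\pi}|f(re^{i\theta})|^2d\theta<\infty$; $\|T\|_{-1}$ denotes the operator norm on $H^2$. $\lfloor\cdot\rfloor$ is the greatest integer function. *)

theory Defs
  imports "HOL-Analysis.Analysis"
begin

definition H2_mean :: "(complex \<Rightarrow> complex) \<Rightarrow> real \<Rightarrow> real" where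
  "H2_mean f r = (1 / (2 * pi)) * integral {0..2*pi} (\<lambda>\<theta>. (cmod (f (of_real r * cis \<theta>)))^2)"

definition in_H2 :: "(complex \<Rightarrow> complex) \<Rightarrow> bool" where
  "in_H2 f \<longleftrightarrow> f holomorphic_on ball 0 1 \<and> bdd_above (H2_mean f ` {0<..<1})"

definition H2_norm :: "(complex \<Rightarrow> complex) \<Rightarrow> real" where
  "H2_norm f = sqrt (SUP r\<in>{0<..<1}. H2_mean f r)"

definition H2_opnorm :: "((complex \<Rightarrow> complex) \<Rightarrow> (complex \<Rightarrow> complex)) \<Rightarrow> real" where
  "H2_opnorm T = (SUP f\<in>{f. in_H2 f \<and> H2_norm f \<le> 1}. H2_norm (T f))"

definition comp_diff :: "(complex \<Rightarrow> complex) \<Rightarrow> nat \<Rightarrow> (complex \<Rightarrow> complex) \<Rightarrow> (complex \<Rightarrow> complex)" where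
  "comp_diff \<phi> n f = (\<lambda>z. (deriv ^^ n) f (\<phi> z))"

end

theory Submission
  imports Defs "HOL-Complex_Analysis.Complex_Analysis"
begin


lemma cos_nx_int: fixes m :: int
  shows "((\<lambda>x. cos (real_of_int m * x)) has_integral (if m = 0 then 2*pi else 0)) {0..2*pi}"
proof (cases "m = 0")
  case False
  have "((\<lambda>x. cos (m * x)) has_integral (sin (m * (2*pi))/m - sin (m * (0::real))/m)) {0..2*pi}"
  proof (rule fundamental_theorem_of_calculus)
    show "((\<lambda>x. sin (m * x) / m) has_vector_derivative cos (m * a)) (at a within {0..2*pi})"
      for a :: real
      using False
      unfolding has_vector_derivative_def
      by (intro derivative_eq_intros | force)+
  qed auto
  moreover have "sin (m * (2*pi)) = 0" using sin_int_2pin[of m] by (simp add: mult.commute)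
  ultimately show ?thesis using False by simp
next
  case True
  then show ?thesis using has_integral_const_real[of "1::real" 0 "2*pi"] by simp
qed

lemma sin_nx_int: fixes m :: int
  shows "((\<lambda>x. sin (real_of_int m * x)) has_integral 0) {0..2*pi}"
proof (cases "m = 0")
  case False
  have "((\<lambda>x. sin (m * x)) has_integral (- cos (m * (2*pi))/m - - cos (m * (0::real))/m)) {0..2*pi}"
  proof (rule fundamental_theorem_of_calculus)
    show "((\<lambda>x. - cos (m * x) / m) has_vector_derivative sin (m * a)) (at a within {0..2*pi})"
      for a :: real
      using False
      unfolding has_vector_derivative_def
      by (intro derivative_eq_intros | force)+
  qed auto
  moreover have "cos (m * (2*pi)) = 1" using cos_int_2pin[of m] by (simp add: mult.commute)
  ultimately show ?thesis using False by simp
next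
  case True
  then show ?thesis by simp
qed

lemma finite_parseval:
  fixes d :: "nat \<Rightarrow> complex"
  shows "((\<lambda>\<theta>. (cmod (\<Sum>k<m. d k * cis (real k * \<theta>)))^2) has_integral
          (2*pi) * (\<Sum>k<m. (cmod (d k))^2)) {0..2*pi}"
proof -
  have eq: "(cmod (\<Sum>k<m. d k * cis (real k * \<theta>)))^2 =
     (\<Sum>j<m. \<Sum>k<m. Re (d j * cnj (d k)) * cos (real_of_int (int j - int k) * \<theta>)
                    - Im (d j * cnj (d k)) * sin (real_of_int (int j - int k) * \<theta>))" for \<theta>
  proof -
    have "complex_of_real ((cmod (\<Sum>k<m. d k * cis (real k * \<theta>)))^2)
      = (\<Sum>k<m. d k * cis (real k * \<theta>)) * cnj (\<Sum>k<m. d k * cis (real k * \<theta>))"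
      by (rule complex_norm_square)
    also have "\<dots> = (\<Sum>j<m. \<Sum>k<m. (d j * cnj (d k)) * cis (real_of_int (int j - int k) * \<theta>))"
    proof -
      have "d j * cis (real j * \<theta>) * cnj (d k * cis (real k * \<theta>)) =
            (d j * cnj (d k)) * cis (real_of_int (int j - int k) * \<theta>)" (is "?h j k") for j k
      proof -
        have "cis (real j * \<theta>) * cis (- (real k * \<theta>)) = cis (real_of_int (int j - int k) * \<theta>)"
          by (simp add: cis_mult left_diff_distrib)
        then show ?thesis by (simp add: cis_cnj mult_ac)
      qed
      then show ?thesis unfolding cnj_sum sum_product by (intro sum.cong refl) blast
    qed
    finally have "(cmod (\<Sum>k<m. d k * cis (real k * \<theta>)))^2 =
       Re (\<Sum>j<m. \<Sum>k<m. (d j * cnj (d k)) * cis (real_of_int (int j - int k) * \<theta>))"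
      by (metis Re_complex_of_real)
    then show ?thesis by (simp add: Re_sum cis.sel)
  qed
  have "((\<lambda>\<theta>. \<Sum>j<m. \<Sum>k<m. Re (d j * cnj (d k)) * cos (real_of_int (int j - int k) * \<theta>)
                    - Im (d j * cnj (d k)) * sin (real_of_int (int j - int k) * \<theta>))
        has_integral (\<Sum>j<m. \<Sum>k<m. Re (d j * cnj (d k)) * (if j = k then 2*pi else 0) - Im (d j * cnj (d k)) * 0)) {0..2*pi}"
    apply (intro has_integral_sum has_integral_diff has_integral_mult_right finite_lessThan)
    using cos_nx_int[of "int _ - int _"] sin_nx_int[of "int _ - int _"] by auto
  moreover have "(\<Sum>j<m. \<Sum>k<m. Re (d j * cnj (d k)) * (if j = k then 2*pi else 0) - Im (d j * cnj (d k)) * 0)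
     = (2*pi) * (\<Sum>k<m. (cmod (d k))^2)"
  proof -
    have "(\<Sum>k<m. Re (d j * cnj (d k)) * (if j = k then 2*pi else 0) - Im (d j * cnj (d k)) * 0)
         = (2*pi) * (cmod (d j))^2" if "j < m" for j
    proof -
      have "(\<Sum>k<m. Re (d j * cnj (d k)) * (if j = k then 2*pi else 0) - Im (d j * cnj (d k)) * 0)
          = (\<Sum>k<m. if j = k then Re (d j * cnj (d k)) * (2*pi) else 0)"
        by (intro sum.cong) auto
      also have "\<dots> = Re (d j * cnj (d j)) * (2*pi)" using that by (simp add: sum.delta)
      also have "Re (d j * cnj (d j)) = (cmod (d j))^2"
        by (metis Re_complex_of_real complex_norm_square)
      finally show ?thesis by simp
    qed
    then show ?thesis by (simp add: sum_distrib_left)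
  qed
  ultimately show ?thesis by (simp add: eq)
qed

lemma mean_series:
  fixes c :: "nat \<Rightarrow> complex" and g :: "complex \<Rightarrow> complex"
  assumes S: "\<And>z. z \<in> ball 0 1 \<Longrightarrow> (\<lambda>k. c k * z^k) sums g z"
    and r: "0 \<le> r" "r < 1"
  shows "(\<lambda>k. (cmod (c k))^2 * r^(2*k)) sums H2_mean g r"
proof -
  define \<rho> where "\<rho> = (1 + r) / 2"
  have \<rho>: "r < \<rho>" "\<rho> < 1" "0 \<le> \<rho>" using r by (auto simp: \<rho>_def)
  have "summable (\<lambda>k. c k * (complex_of_real \<rho>)^k)"
    using S[of "complex_of_real \<rho>"] \<rho> by (auto intro: sums_summable)
  then have sm: "summable (\<lambda>k. norm (c k * (complex_of_real r)^k))"
    by (rule powser_insidea) (use \<rho> r in auto)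
  define s where "s = (\<Sum>k. norm (c k * (complex_of_real r)^k))"
  define F where "F m \<theta> = (cmod (\<Sum>k<m. c k * (complex_of_real r * cis \<theta>)^k))^2" for m \<theta>
  define G where "G \<theta> = (cmod (g (complex_of_real r * cis \<theta>)))^2" for \<theta>
  define P where "P m = (\<Sum>k<m. (cmod (c k))^2 * r^(2*k))" for m
  have trm: "c k * (complex_of_real r * cis \<theta>)^k = (c k * complex_of_real (r^k)) * cis (real k * \<theta>)" for k \<theta>
    by (simp add: power_mult_distrib Complex.DeMoivre)
  have Fint: "(F m has_integral (2*pi) * P m) {0..2*pi}" for m
  proof -
    have "(\<Sum>k<m. (cmod (c k * complex_of_real (r^k)))^2) = P m"
      unfolding P_def by (intro sum.cong refl) (simp add: norm_mult power_mult_distrib norm_power abs_of_nonneg r flip: power_mult, simp add: mult.commute)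
    then show ?thesis
      using finite_parseval[of "\<lambda>k. c k * complex_of_real (r^k)" m]
      unfolding F_def trm by simp
  qed
  have bound: "norm (F m \<theta>) \<le> s^2" for m \<theta>
  proof -
    have "cmod (\<Sum>k<m. c k * (complex_of_real r * cis \<theta>)^k) \<le> (\<Sum>k<m. norm (c k * (complex_of_real r * cis \<theta>)^k))"
      by (rule norm_sum)
    also have "\<dots> = (\<Sum>k<m. norm (c k * (complex_of_real r)^k))"
      by (simp add: norm_mult norm_power)
    also have "\<dots> \<le> s" unfolding s_def by (rule sum_le_suminf[OF sm]) auto
    finally have "cmod (\<Sum>k<m. c k * (complex_of_real r * cis \<theta>)^k) \<le> s" .
    then show ?thesis unfolding F_def by (simp add: power_mono)
  qed
  have conv: "(\<lambda>m. F m \<theta>) \<longlonglongrightarrow> G \<theta>" for \<theta>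
  proof -
    have "complex_of_real r * cis \<theta> \<in> ball 0 1" using r by (simp add: norm_mult)
    then have "(\<lambda>m. \<Sum>k<m. c k * (complex_of_real r * cis \<theta>)^k) \<longlonglongrightarrow> g (complex_of_real r * cis \<theta>)"
      using S sums_def by blast
    then show ?thesis unfolding F_def G_def by (intro tendsto_intros)
  qed
  have lim: "(\<lambda>m. integral {0..2*pi} (F m)) \<longlonglongrightarrow> integral {0..2*pi} G"
    by (rule dominated_convergence(2)[where h = "\<lambda>_. s^2"])
       (use Fint bound conv in auto)
  have "(\<lambda>m. (1/(2*pi)) * integral {0..2*pi} (F m)) \<longlonglongrightarrow> (1/(2*pi)) * integral {0..2*pi} G"
    by (intro tendsto_intros lim)
  moreover have "(1/(2*pi)) * integral {0..2*pi} (F m) = P m" for m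
    using Fint[of m] by (simp add: integral_unique)
  ultimately have "P \<longlonglongrightarrow> H2_mean g r"
    unfolding H2_mean_def G_def by simp
  then show ?thesis unfolding sums_def P_def .
qed

lemma partial_bound:
  fixes c :: "nat \<Rightarrow> complex" and g :: "complex \<Rightarrow> complex"
  assumes S: "\<And>z. z \<in> ball 0 1 \<Longrightarrow> (\<lambda>k. c k * z^k) sums g z"
    and y: "\<And>r. r \<in> {0<..<1} \<Longrightarrow> H2_mean g r \<le> y"
  shows "(\<Sum>k<m. (cmod (c k))^2) \<le> y"
proof -
  have le: "(\<Sum>k<m. (cmod (c k))^2 * r^(2*k)) \<le> y" if "r \<in> {0<..<1}" for r
  proof -
    have sr: "(\<lambda>k. (cmod (c k))^2 * r^(2*k)) sums H2_mean g r"
      using mean_series[OF S] that by auto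
    have "(\<Sum>k<m. (cmod (c k))^2 * r^(2*k)) \<le> H2_mean g r"
      using sum_le_suminf[OF sums_summable[OF sr], of "{..<m}"] that sums_unique[OF sr] by auto
    then show ?thesis using y[OF that] by linarith
  qed
  have lim: "((\<lambda>r. \<Sum>k<m. (cmod (c k))^2 * r^(2*k)) \<longlongrightarrow> (\<Sum>k<m. (cmod (c k))^2 * 1^(2*k))) (at_left (1::real))"
    by (intro tendsto_intros)
  have "(\<Sum>k<m. (cmod (c k))^2 * 1^(2*k)) \<le> y"
    by (rule tendsto_upperbound[OF lim]) (use le eventually_at_left_real[of 0 "1::real"] in \<open>auto elim: eventually_mono\<close>)
  then show ?thesis by simp
qed

lemma H2_series:
  fixes c :: "nat \<Rightarrow> complex" and g :: "complex \<Rightarrow> complex"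
  assumes S: "\<And>z. z \<in> ball 0 1 \<Longrightarrow> (\<lambda>k. c k * z^k) sums g z"
    and hol: "g holomorphic_on ball 0 1"
    and sm: "summable (\<lambda>k. (cmod (c k))^2)"
  shows "in_H2 g" "H2_norm g = sqrt (\<Sum>k. (cmod (c k))^2)"
proof -
  define T where "T = (\<Sum>k. (cmod (c k))^2)"
  have meanle: "H2_mean g r \<le> T" if "r \<in> {0<..<1}" for r
  proof -
    have sr: "(\<lambda>k. (cmod (c k))^2 * r^(2*k)) sums H2_mean g r"
      using mean_series[OF S] that by auto
    have "(\<Sum>k. (cmod (c k))^2 * r^(2*k)) \<le> T" unfolding T_def
    proof (rule suminf_le[OF _ sums_summable[OF sr] sm])
      fix k
      have "r^(2*k) \<le> 1" using that by (auto intro: power_le_one)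
      then show "(cmod (c k))^2 * r^(2*k) \<le> (cmod (c k))^2"
        by (simp add: mult_left_le)
    qed
    then show ?thesis using sums_unique[OF sr] by simp
  qed
  then show "in_H2 g" unfolding in_H2_def using hol by (auto intro!: bdd_aboveI2[where M = T])
  have "(SUP r\<in>{0<..<1}. H2_mean g r) = T"
  proof (rule cSup_eq_non_empty)
    show "H2_mean g ` {0<..<1} \<noteq> {}" by auto
    show "x \<le> T" if "x \<in> H2_mean g ` {0<..<1}" for x using that meanle by auto
    show "T \<le> y" if "\<And>x. x \<in> H2_mean g ` {0<..<1} \<Longrightarrow> x \<le> y" for y
      unfolding T_def
      by (rule suminf_le_const[OF sm], rule partial_bound[OF S]) (use that in auto)
  qed
  then show "H2_norm g = sqrt (\<Sum>k. (cmod (c k))^2)" unfolding H2_norm_def T_def by simp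
qed

lemma H2_series_summable:
  fixes c :: "nat \<Rightarrow> complex" and g :: "complex \<Rightarrow> complex"
  assumes S: "\<And>z. z \<in> ball 0 1 \<Longrightarrow> (\<lambda>k. c k * z^k) sums g z"
    and H: "in_H2 g"
  shows "summable (\<lambda>k. (cmod (c k))^2)"
proof -
  obtain y where y: "\<And>r. r \<in> {0<..<1} \<Longrightarrow> H2_mean g r \<le> y"
  proof -
    from H obtain M where "\<forall>x\<in>H2_mean g ` {0<..<1}. x \<le> M"
      unfolding in_H2_def bdd_above_def by blast
    then show ?thesis using that[of M] by auto
  qed
  show ?thesis
  proof (rule bounded_imp_summable)
    fix m
    show "(\<Sum>k\<le>m. (cmod (c k))^2) \<le> y"
      using partial_bound[OF S y, of "Suc m"] by (simp add: lessThan_Suc_atMost)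
  qed simp
qed



lemma prod_fact: "k \<le> N \<Longrightarrow> (\<Prod>i<k. N - i) * fact (N - k) = (fact N :: nat)"
proof (induction k)
  case 0 then show ?case by simp
next
  case (Suc k)
  have e: "N - k = Suc (N - Suc k)" using Suc.prems by simp
  have "fact (N - k) = (N - k) * (fact (N - Suc k) :: nat)"
    unfolding e fact_Suc by simp
  then show ?case using Suc by (simp add: mult_ac)
qed

lemma deriv_power:
  "(deriv ^^ k) (\<lambda>z::complex. z^N) = (\<lambda>z. of_nat (\<Prod>i<k. N - i) * z^(N-k))"
proof (induction k)
  case 0
  then show ?case by simp
next
  case (Suc k)
  have "deriv (\<lambda>z::complex. of_nat (\<Prod>i<k. N - i) * z^(N-k)) z = of_nat (\<Prod>i<Suc k. N - i) * z^(N - Suc k)" for z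
  proof -
    have "((\<lambda>z::complex. of_nat (\<Prod>i<k. N - i) * z^(N-k)) has_field_derivative
          of_nat (\<Prod>i<k. N - i) * (of_nat (N-k) * z^(N-k-Suc 0))) (at z)"
      by (rule DERIV_cmult) (use DERIV_power[OF DERIV_ident, of "N-k" z UNIV] in simp)
    moreover have "of_nat (\<Prod>i<k. N - i) * (of_nat (N-k) * z^(N-k-Suc 0)) = of_nat (\<Prod>i<Suc k. N - i) * z^(N - Suc k)"
      by (simp add: mult_ac)
    ultimately show ?thesis by (simp add: DERIV_imp_deriv)
  qed
  then show ?case by (simp add: Suc.IH)
qed

lemma weight_max:
  fixes t :: real and n :: nat
  assumes t: "0 < t" "t < 1"
  defines "N \<equiv> nat \<lfloor>real n / (1 - t)\<rfloor>"
  shows "n \<le> N" "fact (k+n) / fact k * t^k \<le> fact ((N-n)+n) / fact (N-n) * t^(N-n)"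
proof -
  define w where "w k = fact (k+n) / fact k * t^k" for k
  have x0: "real n \<le> real n / (1 - t)" using t by (simp add: field_simps mult_left_le)
  then have "n \<le> \<lfloor>real n / (1 - t)\<rfloor>" by linarith
  then show nN: "n \<le> N" unfolding N_def by linarith
  have step: "w (Suc k) = w k * (real (k+n+1) / real (k+1) * t)" for k
    unfolding w_def by (simp add: field_simps)
  have wpos: "0 \<le> w k" for k unfolding w_def using t by simp
  have inc: "w k \<le> w (Suc k)" if "Suc k \<le> N - n" for k
  proof -
    have "real (k+n+1) \<le> real N" using that nN by linarith
    also have "real N \<le> real n / (1 - t)"
    proof -
      have "0 \<le> \<lfloor>real n / (1 - t)\<rfloor>" using t by simp
      then have "real N = real_of_int \<lfloor>real n / (1 - t)\<rfloor>" unfolding N_def by simp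
      then show ?thesis by linarith
    qed
    finally have "real (k+n+1) * (1 - t) \<le> real n" using t by (simp add: field_simps)
    then have "real (k+1) \<le> real (k+n+1) * t" by (simp add: algebra_simps)
    then have q: "1 \<le> real (k+n+1) / real (k+1) * t" by (simp add: field_simps)
    have "w k * 1 \<le> w k * (real (k+n+1) / real (k+1) * t)"
      by (rule mult_left_mono[OF q wpos])
    then show ?thesis using step[of k] by simp
  qed
  have dec: "w (Suc k) \<le> w k" if "N - n \<le> k" for k
  proof -
    have "N < k + n + 1" using that nN by linarith
    then have "\<lfloor>real n / (1 - t)\<rfloor> < int (k+n+1)" unfolding N_def by linarith
    then have "real n / (1 - t) < real (k+n+1)" by (simp add: floor_less_iff)
    then have "real n < real (k+n+1) * (1 - t)" using t by (simp add: field_simps)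
    then have "real (k+n+1) * t < real (k+1)" by (simp add: algebra_simps)
    then have q: "real (k+n+1) / real (k+1) * t \<le> 1" by (simp add: field_simps)
    have "w k * (real (k+n+1) / real (k+1) * t) \<le> w k * 1"
      by (rule mult_left_mono[OF q wpos])
    then show ?thesis using step[of k] by simp
  qed
  have "w k \<le> w (N-n)"
  proof (cases "k \<le> N - n")
    case True
    then show ?thesis
    proof (induction k rule: inc_induct)
      case (step m)
      then show ?case using inc[of m] by linarith
    qed simp
  next
    case False
    then have "N - n \<le> k" by simp
    then show ?thesis
    proof (induction k rule: dec_induct)
      case (step m)
      then show ?case using dec[of m] by linarith
    qed simp
  qed
  then show "fact (k+n) / fact k * t^k \<le> fact ((N-n)+n) / fact (N-n) * t^(N-n)" unfolding w_def .
qed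



lemma main_bound:
  fixes n :: nat and b :: complex and W :: real and f :: "complex \<Rightarrow> complex"
  assumes bb: "cmod b < 1" and W0: "0 \<le> W"
    and wmax: "\<And>k. fact (k+n) / fact k * cmod b ^ k \<le> W"
    and H: "in_H2 f"
  shows "in_H2 (comp_diff (\<lambda>z. b * z) n f) \<and> H2_norm (comp_diff (\<lambda>z. b * z) n f) \<le> W * H2_norm f"
proof -
  have hol: "f holomorphic_on ball 0 1" using H unfolding in_H2_def by simp
  define a where "a k = (deriv ^^ k) f 0 / fact k" for k
  have Sf: "(\<lambda>k. a k * z^k) sums f z" if "z \<in> ball 0 1" for z
    using holomorphic_power_series[OF hol that] by (simp add: a_def)
  have sma: "summable (\<lambda>k. (cmod (a k))^2)" by (rule H2_series_summable[OF Sf H])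
  have nf: "H2_norm f = sqrt (\<Sum>k. (cmod (a k))^2)" by (rule H2_series(2)[OF Sf hol sma])
  define h where "h = (deriv ^^ n) f"
  have holh: "h holomorphic_on ball 0 1" unfolding h_def by (rule holomorphic_higher_deriv[OF hol]) simp
  have hk: "(deriv ^^ k) h = (deriv ^^ (k+n)) f" for k by (simp add: h_def funpow_add)
  define c where "c k = (deriv ^^ (k+n)) f 0 / fact k * b^k" for k
  have Dd: "comp_diff (\<lambda>z. b * z) n f = (\<lambda>z. h (b * z))" by (simp add: comp_diff_def h_def)
  have inball: "b * z \<in> ball 0 1" if "z \<in> ball 0 1" for z
  proof -
    have "cmod b * cmod z \<le> 1 * cmod z" by (rule mult_right_mono) (use bb in auto)
    then show ?thesis using that by (simp add: norm_mult)
  qed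
  have Sg: "(\<lambda>k. c k * z^k) sums comp_diff (\<lambda>z. b * z) n f z" if "z \<in> ball 0 1" for z
  proof -
    have "(\<lambda>k. (deriv ^^ k) h 0 / fact k * (b * z - 0)^k) sums h (b * z)"
      by (rule holomorphic_power_series[OF holh inball[OF that]])
    moreover have "(deriv ^^ k) h 0 / fact k * (b * z - 0)^k = c k * z^k" for k
      by (simp add: hk c_def power_mult_distrib mult_ac)
    ultimately show ?thesis by (simp add: Dd)
  qed
  have holg: "comp_diff (\<lambda>z. b * z) n f holomorphic_on ball 0 1"
  proof -
    have "(h \<circ> (\<lambda>z. b * z)) holomorphic_on ball 0 1"
      by (rule holomorphic_on_compose_gen[OF _ holh]) (auto intro!: holomorphic_intros inball)
    then show ?thesis by (simp add: Dd o_def)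
  qed
  have c_eq: "c k = a (k+n) * complex_of_real (fact (k+n) / fact k) * b^k" for k
    by (simp add: c_def a_def field_simps)
  have cb: "(cmod (c k))^2 \<le> W^2 * (cmod (a (k+n)))^2" for k
  proof -
    have "cmod (c k) = cmod (a (k+n)) * (fact (k+n) / fact k * cmod b ^ k)"
      unfolding c_eq norm_mult norm_power norm_of_real by simp
    also have "\<dots> \<le> cmod (a (k+n)) * W" by (rule mult_left_mono[OF wmax]) simp
    finally have "cmod (c k) \<le> W * cmod (a (k+n))" by (simp add: mult_ac)
    then have "(cmod (c k))^2 \<le> (W * cmod (a (k+n)))^2" by (rule power_mono) simp
    then show ?thesis by (simp add: power_mult_distrib)
  qed
  have sma': "summable (\<lambda>k. (cmod (a (k+n)))^2)"
    by (rule summable_ignore_initial_segment[OF sma])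
  have smW: "summable (\<lambda>k. W^2 * (cmod (a (k+n)))^2)" by (rule summable_mult[OF sma'])
  have smc: "summable (\<lambda>k. (cmod (c k))^2)"
    by (rule summable_comparison_test'[OF smW]) (use cb in simp)
  have g: "in_H2 (comp_diff (\<lambda>z. b * z) n f)" "H2_norm (comp_diff (\<lambda>z. b * z) n f) = sqrt (\<Sum>k. (cmod (c k))^2)"
    using H2_series[OF Sg holg smc] by auto
  have "(\<Sum>k. (cmod (c k))^2) \<le> (\<Sum>k. W^2 * (cmod (a (k+n)))^2)"
    by (rule suminf_le[OF cb smc smW])
  also have "\<dots> = W^2 * (\<Sum>k. (cmod (a (k+n)))^2)" by (rule suminf_mult[OF sma'])
  also have "(\<Sum>k. (cmod (a (k+n)))^2) \<le> (\<Sum>k. (cmod (a k))^2)"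
  proof -
    have "(\<Sum>k. (cmod (a k))^2) = (\<Sum>k. (cmod (a (k+n)))^2) + (\<Sum>i<n. (cmod (a i))^2)"
      by (rule suminf_split_initial_segment[OF sma])
    moreover have "0 \<le> (\<Sum>i<n. (cmod (a i))^2)" by (intro sum_nonneg) simp
    ultimately show ?thesis by linarith
  qed
  then have "W^2 * (\<Sum>k. (cmod (a (k+n)))^2) \<le> W^2 * (\<Sum>k. (cmod (a k))^2)"
    by (rule mult_left_mono) simp
  finally have le: "(\<Sum>k. (cmod (c k))^2) \<le> W^2 * (\<Sum>k. (cmod (a k))^2)" .
  have "sqrt (\<Sum>k. (cmod (c k))^2) \<le> sqrt (W^2 * (\<Sum>k. (cmod (a k))^2))"
    using le by (rule real_sqrt_le_mono)
  also have "\<dots> = W * H2_norm f" using W0 by (simp add: nf real_sqrt_mult)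
  finally show ?thesis using g by simp
qed

theorem theorem3p3:
  fixes n :: nat and b :: complex
  assumes "n \<ge> 1" and "b \<in> ball 0 1" and "b \<noteq> 0"
  defines "N \<equiv> nat \<lfloor>real n / (1 - cmod b)\<rfloor>"
  shows "(\<forall>f. in_H2 f \<longrightarrow> in_H2 (comp_diff (\<lambda>z. b * z) n f))
    \<and> bdd_above ((\<lambda>f. H2_norm (comp_diff (\<lambda>z. b * z) n f)) ` {f. in_H2 f \<and> H2_norm f \<le> 1})
    \<and> H2_opnorm (comp_diff (\<lambda>z. b * z) n) = fact n * real (N choose n) * cmod b ^ (N - n)"
proof -
  define t where "t = cmod b"
  have t: "0 < t" "t < 1" using assms(2,3) by (auto simp: t_def)
  define W where "W = fact n * real (N choose n) * t ^ (N - n)"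
  have N_eq: "N = nat \<lfloor>real n / (1 - t)\<rfloor>" by (simp add: N_def t_def)
  have nN: "n \<le> N" using weight_max(1)[OF t, of n] N_eq by simp
  have fN: "fact N = fact n * fact (N - n) * real (N choose n)"
    using binomial_fact_lemma[OF nN] by (metis of_nat_fact of_nat_mult)
  have W_eq: "fact ((N-n)+n) / fact (N-n) * t^(N-n) = W"
    using nN by (simp add: W_def fN)
  have wmax: "fact (k+n) / fact k * cmod b ^ k \<le> W" for k
    using weight_max(2)[OF t, where n=n and k=k] N_eq W_eq by (simp add: t_def)
  have W0: "0 \<le> W" unfolding W_def using t by simp
  have main: "in_H2 (comp_diff (\<lambda>z. b * z) n f) \<and> H2_norm (comp_diff (\<lambda>z. b * z) n f) \<le> W * H2_norm f"
    if "in_H2 f" for f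
    by (rule main_bound[OF _ W0 wmax that]) (use t in \<open>simp add: t_def\<close>)
  have bnd: "H2_norm (comp_diff (\<lambda>z. b * z) n f) \<le> W" if "in_H2 f" "H2_norm f \<le> 1" for f
  proof -
    have "W * H2_norm f \<le> W * 1" by (rule mult_left_mono[OF that(2) W0])
    then show ?thesis using main[OF that(1)] by simp
  qed
  define e where "e = (\<lambda>z::complex. z^N)"
  have Se: "(\<lambda>k. (if k = N then 1 else 0) * z^k) sums e z" for z
  proof -
    have "(\<lambda>k. if k = N then z^k else 0) sums z^N" by (rule sums_single)
    moreover have "(\<lambda>k. (if k = N then 1 else 0) * z^k) = (\<lambda>k. if k = N then z^k else 0)" by auto
    ultimately show ?thesis by (simp add: e_def)
  qed
  have hole: "e holomorphic_on ball 0 1" unfolding e_def by (intro holomorphic_intros)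
  have sq1: "(\<lambda>k. (cmod (if k = N then 1 else 0 :: complex))^2) = (\<lambda>k. if k = N then 1 else 0)"
    by auto
  have sme: "summable (\<lambda>k. (cmod (if k = N then 1 else 0 :: complex))^2)"
    unfolding sq1 by simp
  have eH: "in_H2 e" and ne: "H2_norm e = 1"
  proof -
    have "(\<lambda>k. if k = N then (1::real) else 0) sums 1" using sums_single[of N "\<lambda>_. (1::real)"] by simp
    then have "(\<Sum>k. if k = N then (1::real) else 0) = 1" by (rule sums_unique[symmetric])
    then show "in_H2 e" "H2_norm e = 1" using H2_series[OF Se hole sme] unfolding sq1 by auto
  qed
  define P where "P = (\<Prod>i<n. N - i)"
  have PW: "real P = fact n * real (N choose n)"
  proof -
    have "P * fact (N - n) = fact N" unfolding P_def by (rule prod_fact[OF nN])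
    also have "\<dots> = fact n * (N choose n) * fact (N - n)"
      using binomial_fact_lemma[OF nN] by (simp add: mult_ac)
    finally have "P = fact n * (N choose n)" by simp
    then show ?thesis by simp
  qed
  have De: "comp_diff (\<lambda>z. b * z) n e = (\<lambda>z. of_nat P * (b * z)^(N-n))"
    by (simp add: comp_diff_def e_def deriv_power P_def)
  define d where "d k = (if k = N - n then of_nat P * b^(N-n) else 0 :: complex)" for k
  have SDe: "(\<lambda>k. d k * z^k) sums comp_diff (\<lambda>z. b * z) n e z" for z
  proof -
    have "(\<lambda>k. if k = N - n then of_nat P * b^(N-n) * z^k else 0) sums (of_nat P * b^(N-n) * z^(N-n))"
      by (rule sums_single)
    moreover have "(\<lambda>k. d k * z^k) = (\<lambda>k. if k = N - n then of_nat P * b^(N-n) * z^k else 0)"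
      by (auto simp: d_def)
    ultimately show ?thesis unfolding De by (simp add: power_mult_distrib mult.assoc)
  qed
  have holDe: "comp_diff (\<lambda>z. b * z) n e holomorphic_on ball 0 1"
    unfolding De by (intro holomorphic_intros)
  have sqd: "(\<lambda>k. (cmod (d k))^2) = (\<lambda>k. if k = N - n then (cmod (of_nat P * b^(N-n)))^2 else 0)"
    by (auto simp: d_def)
  have smd: "summable (\<lambda>k. (cmod (d k))^2)" unfolding sqd by simp
  have "H2_norm (comp_diff (\<lambda>z. b * z) n e) = sqrt ((cmod (of_nat P * b^(N-n)))^2)"
  proof -
    have "(\<lambda>k. if k = N - n then (cmod (of_nat P * b^(N-n)))^2 else 0) sums (cmod (of_nat P * b^(N-n)))^2"
      by (rule sums_single)
    then have "(\<Sum>k. if k = N - n then (cmod (of_nat P * b^(N-n)))^2 else 0) = (cmod (of_nat P * b^(N-n)))^2"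
      by (rule sums_unique[symmetric])
    then show ?thesis using H2_series(2)[OF SDe holDe smd] unfolding sqd by simp
  qed
  also have "\<dots> = W"
    by (simp add: norm_mult norm_power W_def PW t_def)
  finally have nDe: "H2_norm (comp_diff (\<lambda>z. b * z) n e) = W" .
  have inS: "e \<in> {f. in_H2 f \<and> H2_norm f \<le> 1}" using eH ne by simp
  have part1: "\<forall>f. in_H2 f \<longrightarrow> in_H2 (comp_diff (\<lambda>z. b * z) n f)" using main by blast
  have part2: "bdd_above ((\<lambda>f. H2_norm (comp_diff (\<lambda>z. b * z) n f)) ` {f. in_H2 f \<and> H2_norm f \<le> 1})"
    by (rule bdd_aboveI2[where M = W]) (use bnd in auto)
  have part3: "H2_opnorm (comp_diff (\<lambda>z. b * z) n) = W"
    unfolding H2_opnorm_def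
  proof (rule cSup_eq_maximum)
    show "W \<in> (\<lambda>f. H2_norm (comp_diff (\<lambda>z. b * z) n f)) ` {f. in_H2 f \<and> H2_norm f \<le> 1}"
      using inS nDe by (metis image_eqI)
    show "x \<le> W" if "x \<in> (\<lambda>f. H2_norm (comp_diff (\<lambda>z. b * z) n f)) ` {f. in_H2 f \<and> H2_norm f \<le> 1}" for x
      using that bnd by auto
  qed
  show ?thesis using part1 part2 part3 by (simp add: W_def t_def)
qed

end
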